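(* Let $w$ be a word of length $k$. Then for every $n > 2k$, $H_w(n) \ge \sum_{i \in I} H_w(n-k+i)$.
   Context: Let $\Omega$ be a finite alphabet with $q\ge2$ letters; $w = w_k\dots w_1$. $h_w(n)$: number of strings of length $n$ over $\Omega$ whose last $k$ characters form $w$ and with no other occurrence of $w$ as a block of $k$ consecutive characters ($h_w(n)=0$ for $n<k$). $H_w(n) = q h_w(n-1) - h_w(n)$. Autocorrelation digits: $b_i = 1$ ($1\le i\le k$) iff $w_j = w_{k-i+j}$ for $j=1,\dots,i$. For $1\le i\le k-1$ with $b_i=1$, $[i] = \max\{j\in\{1,\dots,k-1\} : b_j = 1,\ i = k-t(k-j) \text{ for some integer } 1\le t\le\lfloor k/(k-j)\rfloor\}$; $I = \{[i] : 1\le i\le k-1,\ b_i=1\}$ (empty if no such $i$). *)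

theory Defs
  imports Main
begin

text \<open>Words are lists; the list w = [w_k, ..., w_1] is written left to right,
  so the paper's letter w_j (1 \<le> j \<le> k) is  w ! (k - j).\<close>

definition wlet :: "'a list \<Rightarrow> nat \<Rightarrow> 'a" where
  "wlet w j = w ! (length w - j)"

definition hw :: "'a set \<Rightarrow> 'a list \<Rightarrow> nat \<Rightarrow> nat" where
  "hw \<Omega> w n = (if n < length w then 0 else
     card {s. length s = n \<and> set s \<subseteq> \<Omega> \<and> drop (n - length w) s = w \<and>
              (\<forall>p. p + length w \<le> n \<and> take (length w) (drop p s) = w \<longrightarrow> p = n - length w)})"

definition Hw :: "'a set \<Rightarrow> 'a list \<Rightarrow> nat \<Rightarrow> int" where
  "Hw \<Omega> w n = int (card \<Omega>) * int (hw \<Omega> w (n - 1)) - int (hw \<Omega> w n)"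

definition autoc :: "'a list \<Rightarrow> nat \<Rightarrow> bool" where
  "autoc w i = (1 \<le> i \<and> i \<le> length w \<and>
     (\<forall>j\<in>{1..i}. wlet w j = wlet w (length w - i + j)))"

definition brk :: "'a list \<Rightarrow> nat \<Rightarrow> nat" where
  "brk w i = Max {j \<in> {1..length w - 1}. autoc w j \<and>
     (\<exists>t::nat. 1 \<le> t \<and> t \<le> length w div (length w - j) \<and>
        int i = int (length w) - int t * (int (length w) - int j))}"

definition Iset :: "'a list \<Rightarrow> nat set" where
  "Iset w = {brk w i | i. 1 \<le> i \<and> i \<le> length w - 1 \<and> autoc w i}"

end

theory Submission
  imports Defs
begin

definition occ :: "'a list \<Rightarrow> 'a list \<Rightarrow> nat \<Rightarrow> bool" where
  "occ w s r = (r + length w \<le> length s \<and> take (length w) (drop r s) = w)"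

lemma occ_append: "occ w (xs @ ys) (length xs + r) = occ w ys r"
  by (auto simp: occ_def)

lemma occ_Cons: "occ w (a # ys) (Suc r) = occ w ys r"
  by (auto simp: occ_def)

lemma occ_nth: assumes "occ w s r" "j < length w" shows "s ! (r + j) = w ! j"
proof -
  have "w ! j = take (length w) (drop r s) ! j" using assms by (simp add: occ_def)
  also have "\<dots> = drop r s ! j" using assms by simp
  also have "\<dots> = s ! (r + j)" using assms by (simp add: occ_def nth_drop)
  finally show ?thesis by simp
qed

lemma fw:
  fixes f :: "nat \<Rightarrow> 'a"
  shows "0 < a \<Longrightarrow> 0 < b \<Longrightarrow> (\<And>i. i + a < a + b - 1 \<Longrightarrow> f i = f (i + a))
    \<Longrightarrow> (\<And>i. i + b < a + b - 1 \<Longrightarrow> f i = f (i + b)) \<Longrightarrow> f (a - 1) = f (b - 1)"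
proof (induction "a + b" arbitrary: a b rule: less_induct)
  case less
  consider "a = b" | "a < b" | "b < a" by linarith
  then show ?case
  proof cases
    case 1 then show ?thesis by simp
  next
    case 2
    define c where "c = b - a"
    have c0: "0 < c" using 2 c_def by simp
    have pa: "\<And>i. i + a < a + c - 1 \<Longrightarrow> f i = f (i + a)" using less.prems(3) c_def 2 by auto
    have pc: "\<And>i. i + c < a + c - 1 \<Longrightarrow> f i = f (i + c)"
    proof -
      fix i assume h: "i + c < a + c - 1"
      have "f i = f (i + b)" using less.prems(4)[of i] h c_def 2 by auto
      moreover have "f (i + c) = f (i + c + a)" using less.prems(3)[of "i + c"] h c_def 2 by auto
      moreover have "i + c + a = i + b" using c_def 2 by simp
      ultimately show "f i = f (i + c)" by simp
    qed
    have "f (a - 1) = f (c - 1)"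
      using less.hyps[of a c] c0 pa pc less.prems(1) c_def 2 by auto
    moreover have "f (b - 1 - a) = f (b - 1 - a + a)" using less.prems(3)[of "b-1-a"] 2 less.prems(1) by auto
    ultimately show ?thesis using c_def 2 less.prems(1) by (simp add: algebra_simps)
  next
    case 3
    define c where "c = a - b"
    have c0: "0 < c" using 3 c_def by simp
    have pb: "\<And>i. i + b < c + b - 1 \<Longrightarrow> f i = f (i + b)" using less.prems(4) c_def 3 by auto
    have pc: "\<And>i. i + c < c + b - 1 \<Longrightarrow> f i = f (i + c)"
    proof -
      fix i assume h: "i + c < c + b - 1"
      have "f i = f (i + a)" using less.prems(3)[of i] h c_def 3 by auto
      moreover have "f (i + c) = f (i + c + b)" using less.prems(4)[of "i + c"] h c_def 3 by auto
      moreover have "i + c + b = i + a" using c_def 3 by simp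
      ultimately show "f i = f (i + c)" by simp
    qed
    have "f (c - 1) = f (b - 1)"
      using less.hyps[of c b] c0 pb pc less.prems(2) c_def 3 by auto
    moreover have "f (a - 1 - b) = f (a - 1 - b + b)" using less.prems(4)[of "a-1-b"] 3 less.prems(2) by auto
    ultimately show ?thesis using c_def 3 less.prems(2) by (simp add: algebra_simps)
  qed
qed

lemma key_lt:
  assumes o1: "occ w (w @ [a] @ y) r1" and o2: "occ w (w @ [b] @ y) r2"
    and r: "0 < r1" "r1 < r2" "r2 \<le> length w"
  shows "a = b"
proof -
  define k where "k = length w"
  define u where "u = w @ [a] @ y"
  define v where "v = w @ [b] @ y"
  have u1: "\<And>m. m < k \<Longrightarrow> u ! m = w ! m" by (simp add: u_def k_def nth_append)
  have u2: "u ! k = a" by (simp add: u_def k_def nth_append)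
  have u3: "\<And>t. u ! (k + 1 + t) = y ! t" by (simp add: u_def k_def nth_append)
  have v2: "v ! k = b" by (simp add: v_def k_def nth_append)
  have v3: "\<And>t. v ! (k + 1 + t) = y ! t" by (simp add: v_def k_def nth_append)
  have U: "\<And>j. j < k \<Longrightarrow> u ! (r1 + j) = w ! j" using occ_nth[OF o1] by (simp add: u_def k_def)
  have V: "\<And>j. j < k \<Longrightarrow> v ! (r2 + j) = w ! j" using occ_nth[OF o2] by (simp add: v_def k_def)
  have ha: "a = w ! (k - r1)" using U[of "k - r1"] u2 r by (simp add: k_def)
  have hb: "b = w ! (k - r2)" using V[of "k - r2"] v2 r by (simp add: k_def)
  define d where "d = r2 - r1"
  define f where "f i = w ! (k - r2 + 1 + i)" for i
  have d0: "0 < d" using r d_def by simp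
  have p1: "\<And>i. i + r1 < r1 + d - 1 \<Longrightarrow> f i = f (i + r1)"
  proof -
    fix i assume h: "i + r1 < r1 + d - 1"
    have "u ! (r1 + (k - r2 + 1 + i)) = w ! (k - r2 + 1 + i)" using U[of "k - r2 + 1 + i"] h d_def r k_def by simp
    moreover have "u ! (r1 + (k - r2 + 1 + i)) = w ! (r1 + (k - r2 + 1 + i))" using u1 h d_def r k_def by simp
    moreover have eq: "k - r2 + 1 + (i + r1) = r1 + (k - r2 + 1 + i)" using r k_def by simp
    ultimately show "f i = f (i + r1)" unfolding f_def by (simp only: eq)
  qed
  have p2: "\<And>i. i + d < r1 + d - 1 \<Longrightarrow> f i = f (i + d)"
  proof -
    fix i assume h: "i + d < r1 + d - 1"
    have e1: "v ! (r2 + (k - r2 + 1 + i)) = w ! (k - r2 + 1 + i)" using V[of "k - r2 + 1 + i"] h d_def r k_def by simp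
    have e2: "u ! (r1 + (k - r1 + 1 + i)) = w ! (k - r1 + 1 + i)" using U[of "k - r1 + 1 + i"] h d_def r k_def by simp
    have "r2 + (k - r2 + 1 + i) = k + 1 + i" "r1 + (k - r1 + 1 + i) = k + 1 + i" using r k_def by auto
    hence "w ! (k - r2 + 1 + i) = w ! (k - r1 + 1 + i)" using e1 e2 u3 v3 by metis
    moreover have eq: "k - r2 + 1 + (i + d) = k - r1 + 1 + i" using r k_def d_def by simp
    ultimately show "f i = f (i + d)" unfolding f_def by (simp only: eq)
  qed
  have "f (r1 - 1) = f (d - 1)" using fw[of r1 d f] r d0 p1 p2 by blast
  moreover have "f (d - 1) = a"
  proof -
    have eq: "k - r2 + 1 + (d - 1) = k - r1" using d_def r k_def by simp
    show ?thesis unfolding f_def eq ha ..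
  qed
  moreover have "f (r1 - 1) = b"
  proof -
    have "u ! (r1 + (k - r2)) = w ! (k - r2)" using U[of "k - r2"] r k_def by simp
    moreover have "u ! (r1 + (k - r2)) = w ! (r1 + (k - r2))" using u1 r k_def by simp
    moreover have "k - r2 + 1 + (r1 - 1) = r1 + (k - r2)" using r k_def by simp
    ultimately show ?thesis using hb by (simp add: f_def add.commute)
  qed
  ultimately show ?thesis by simp
qed

lemma key:
  assumes "occ w (w @ [a] @ y) r1" and "occ w (w @ [b] @ y) r2"
    and "0 < r1" "r1 \<le> length w" "0 < r2" "r2 \<le> length w"
  shows "a = b"
proof -
  consider "r1 < r2" | "r1 = r2" | "r2 < r1" by linarith
  then show ?thesis
  proof cases
    case 1 then show ?thesis using key_lt[OF assms(1,2)] assms by simp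
  next
    case 2
    have "a = w ! (length w - r1)"
      using occ_nth[OF assms(1), of "length w - r1"] assms by (simp add: nth_append)
    moreover have "b = w ! (length w - r1)"
      using occ_nth[OF assms(2), of "length w - r1"] assms 2 by (simp add: nth_append)
    ultimately show ?thesis by simp
  next
    case 3 then show ?thesis using key_lt[OF assms(2,1)] assms by simp
  qed
qed

definition Ys :: "'a set \<Rightarrow> 'a list \<Rightarrow> nat \<Rightarrow> 'a list set" where
  "Ys \<Omega> w n = {s. length s = n \<and> set s \<subseteq> \<Omega> \<and> (\<forall>p. occ w s p \<longleftrightarrow> p = n - length w)}"

definition Gs :: "'a set \<Rightarrow> 'a list \<Rightarrow> nat \<Rightarrow> 'a list set" where
  "Gs \<Omega> w n = {s. length s = n \<and> set s \<subseteq> \<Omega> \<and> (\<forall>p. occ w s p \<longleftrightarrow> p = 0 \<or> p = n - length w)}"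

definition Bad :: "'a set \<Rightarrow> 'a list \<Rightarrow> nat \<Rightarrow> 'a list set" where
  "Bad \<Omega> w n = {s. length s = n \<and> set s \<subseteq> \<Omega> \<and> occ w s 0 \<and> occ w s (n - length w) \<and>
     (\<forall>p. length w \<le> p \<and> p < n - length w \<longrightarrow> \<not> occ w s p) \<and>
     (\<exists>r. 0 < r \<and> r < length w \<and> occ w s r)}"

definition Lset :: "'a set \<Rightarrow> 'a list \<Rightarrow> 'a list \<Rightarrow> 'a set" where
  "Lset \<Omega> w y = {a \<in> \<Omega>. \<exists>r. 0 < r \<and> r \<le> length w \<and> occ w (w @ [a] @ y) r}"

lemma fin_len: "finite \<Omega> \<Longrightarrow> finite {s. length s = n \<and> set s \<subseteq> \<Omega> \<and> P s}"
  by (rule finite_subset[OF _ finite_lists_length_eq[of \<Omega> n]]) auto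

lemma fin_Ys: "finite \<Omega> \<Longrightarrow> finite (Ys \<Omega> w n)"
  unfolding Ys_def by (rule fin_len)
lemma fin_Gs: "finite \<Omega> \<Longrightarrow> finite (Gs \<Omega> w n)"
  unfolding Gs_def by (rule fin_len)
lemma fin_Bad: "finite \<Omega> \<Longrightarrow> finite (Bad \<Omega> w n)"
  unfolding Bad_def by (rule fin_len)

lemma hw_Ys: assumes "length w \<le> n" shows "hw \<Omega> w n = card (Ys \<Omega> w n)"
proof -
  have "{s. length s = n \<and> set s \<subseteq> \<Omega> \<and> drop (n - length w) s = w \<and>
              (\<forall>p. p + length w \<le> n \<and> take (length w) (drop p s) = w \<longrightarrow> p = n - length w)}
        = Ys \<Omega> w n"
  proof (rule set_eqI)
    fix s
    show "s \<in> {s. length s = n \<and> set s \<subseteq> \<Omega> \<and> drop (n - length w) s = w \<and>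
              (\<forall>p. p + length w \<le> n \<and> take (length w) (drop p s) = w \<longrightarrow> p = n - length w)}
        \<longleftrightarrow> s \<in> Ys \<Omega> w n" (is "?A \<longleftrightarrow> ?B")
    proof (cases "length s = n")
      case True
      have td: "take (length w) (drop (n - length w) s) = drop (n - length w) s"
        using True assms by simp
      have o: "occ w s (n - length w) \<longleftrightarrow> drop (n - length w) s = w"
        using True assms td unfolding occ_def by auto
      show ?thesis
      proof
        assume ?A then show ?B using o True unfolding Ys_def occ_def by auto
      next
        assume B: ?B
        then have "occ w s (n - length w)" unfolding Ys_def by auto
        then show ?A using o B True unfolding Ys_def occ_def by auto
      qed
    next
      case False then show ?thesis unfolding Ys_def by auto
    qed
  qed
  then show ?thesis unfolding hw_def using assms by simp
qed

lemma occ_Cons_iff: "occ w (a # s) p \<longleftrightarrow> (p = 0 \<and> occ w (a # s) 0) \<or> (0 < p \<and> occ w s (p - 1))"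
  by (cases p) (auto simp: occ_Cons)

lemma F1:
  assumes fin: "finite \<Omega>" and kn: "length w + 1 \<le> n"
  shows "card \<Omega> * card (Ys \<Omega> w (n - 1)) = card (Ys \<Omega> w n) + card (Gs \<Omega> w n)"
proof -
  define f where "f = (\<lambda>(a::'a, s::'a list). a # s)"
  have img: "f ` (\<Omega> \<times> Ys \<Omega> w (n - 1)) = Ys \<Omega> w n \<union> Gs \<Omega> w n"
  proof
    show "f ` (\<Omega> \<times> Ys \<Omega> w (n - 1)) \<subseteq> Ys \<Omega> w n \<union> Gs \<Omega> w n"
    proof
      fix t assume "t \<in> f ` (\<Omega> \<times> Ys \<Omega> w (n - 1))"
      then obtain a s where t: "t = a # s" and a: "a \<in> \<Omega>" and s: "s \<in> Ys \<Omega> w (n - 1)"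
        unfolding f_def by auto
      have occt: "occ w t p \<longleftrightarrow> (p = 0 \<and> occ w t 0) \<or> p = n - length w" for p
      proof -
        have "occ w t p \<longleftrightarrow> (p = 0 \<and> occ w t 0) \<or> (0 < p \<and> occ w s (p - 1))"
          using occ_Cons_iff t by metis
        also have "\<dots> \<longleftrightarrow> (p = 0 \<and> occ w t 0) \<or> (0 < p \<and> p - 1 = n - 1 - length w)"
        proof -
          have sp: "occ w s (p - 1) \<longleftrightarrow> p - 1 = n - 1 - length w" using s unfolding Ys_def by blast
          show ?thesis by (simp only: sp)
        qed
        also have "\<dots> \<longleftrightarrow> (p = 0 \<and> occ w t 0) \<or> p = n - length w" using kn by auto
        finally show ?thesis .
      qed
      have ls: "length s = n - 1" "set s \<subseteq> \<Omega>" using s unfolding Ys_def by blast+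
      have lt: "length t = n" "set t \<subseteq> \<Omega>" using t a ls kn by auto
      show "t \<in> Ys \<Omega> w n \<union> Gs \<Omega> w n"
      proof (cases "occ w t 0")
        case True
        then have "\<forall>p. occ w t p \<longleftrightarrow> p = 0 \<or> p = n - length w" using occt by blast
        then have "t \<in> Gs \<Omega> w n" using lt unfolding Gs_def by blast
        then show ?thesis by simp
      next
        case False
        then have "\<forall>p. occ w t p \<longleftrightarrow> p = n - length w" using occt by blast
        then have "t \<in> Ys \<Omega> w n" using lt unfolding Ys_def by blast
        then show ?thesis by simp
      qed
    qed
  next
    show "Ys \<Omega> w n \<union> Gs \<Omega> w n \<subseteq> f ` (\<Omega> \<times> Ys \<Omega> w (n - 1))"
    proof
      fix t assume tin: "t \<in> Ys \<Omega> w n \<union> Gs \<Omega> w n"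
      then have lt: "length t = n" "set t \<subseteq> \<Omega>" unfolding Ys_def Gs_def by auto
      then obtain a s where t: "t = a # s" using kn by (cases t) auto
      have a: "a \<in> \<Omega>" using lt t by auto
      have occt: "occ w t p \<longleftrightarrow> (p = 0 \<and> occ w t 0) \<or> p = n - length w" for p
      proof (cases "t \<in> Ys \<Omega> w n")
        case True
        then have o: "occ w t q \<longleftrightarrow> q = n - length w" for q unfolding Ys_def by blast
        show ?thesis using o[of p] o[of 0] kn by auto
      next
        case False
        then have "t \<in> Gs \<Omega> w n" using tin by blast
        then have o: "occ w t q \<longleftrightarrow> q = 0 \<or> q = n - length w" for q unfolding Gs_def by blast
        show ?thesis using o[of p] o[of 0] by auto
      qed
      have "s \<in> Ys \<Omega> w (n - 1)"
      proof -
        have "occ w s p \<longleftrightarrow> p = n - 1 - length w" for p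
        proof -
          have "occ w s p \<longleftrightarrow> occ w t (Suc p)" using t occ_Cons by metis
          also have "\<dots> \<longleftrightarrow> Suc p = n - length w" using occt[of "Suc p"] by simp
          also have "\<dots> \<longleftrightarrow> p = n - 1 - length w" using kn by auto
          finally show ?thesis .
        qed
        moreover have "length s = n - 1" "set s \<subseteq> \<Omega>" using lt t by auto
        ultimately show ?thesis unfolding Ys_def by blast
      qed
      then have "(a, s) \<in> \<Omega> \<times> Ys \<Omega> w (n - 1)" using a by blast
      moreover have "t = f (a, s)" using t unfolding f_def by simp
      ultimately show "t \<in> f ` (\<Omega> \<times> Ys \<Omega> w (n - 1))" by (rule rev_image_eqI)
    qed
  qed
  have inj: "inj_on f (\<Omega> \<times> Ys \<Omega> w (n - 1))" unfolding f_def inj_on_def by auto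
  have disj: "Ys \<Omega> w n \<inter> Gs \<Omega> w n = {}"
  proof -
    have "s \<notin> Gs \<Omega> w n" if "s \<in> Ys \<Omega> w n" for s
    proof
      assume "s \<in> Gs \<Omega> w n"
      then have "occ w s 0" unfolding Gs_def by blast
      moreover have "occ w s 0 \<longleftrightarrow> 0 = n - length w" using that unfolding Ys_def by blast
      ultimately show False using kn by simp
    qed
    then show ?thesis by blast
  qed
  have "card \<Omega> * card (Ys \<Omega> w (n - 1)) = card (\<Omega> \<times> Ys \<Omega> w (n - 1))"
    by (simp add: card_cartesian_product)
  also have "\<dots> = card (f ` (\<Omega> \<times> Ys \<Omega> w (n - 1)))" using card_image[OF inj] by simp
  also have "\<dots> = card (Ys \<Omega> w n) + card (Gs \<Omega> w n)"
    unfolding img using card_Un_disjoint[OF fin_Ys[OF fin] fin_Gs[OF fin] disj] .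
  finally show ?thesis .
qed

lemma HG:
  assumes fin: "finite \<Omega>" and kn: "length w + 1 \<le> n"
  shows "Hw \<Omega> w n = int (card (Gs \<Omega> w n))"
proof -
  have "hw \<Omega> w (n - 1) = card (Ys \<Omega> w (n - 1))" using hw_Ys[of w "n - 1" \<Omega>] kn by simp
  moreover have "hw \<Omega> w n = card (Ys \<Omega> w n)" using hw_Ys[of w n \<Omega>] kn by simp
  moreover have "int (card \<Omega>) * int (card (Ys \<Omega> w (n - 1))) = int (card (Ys \<Omega> w n)) + int (card (Gs \<Omega> w n))"
    using F1[OF fin kn] by (metis of_nat_add of_nat_mult)
  ultimately show ?thesis unfolding Hw_def by simp
qed



lemma autoc_period:
  assumes a: "autoc w i" and il: "i < length w"
  shows "drop (length w - i) w = take i w"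
proof (rule nth_equalityI)
  show "length (drop (length w - i) w) = length (take i w)" using il by simp
next
  fix m assume "m < length (drop (length w - i) w)"
  then have m: "m < i" using il by simp
  have j: "i - m \<in> {1..i}" using m by simp
  have "wlet w (i - m) = wlet w (length w - i + (i - m))" using a j unfolding autoc_def by blast
  moreover have "wlet w (i - m) = w ! (length w - i + m)" unfolding wlet_def using m il
    by (simp add: algebra_simps)
  moreover have "wlet w (length w - i + (i - m)) = w ! m" unfolding wlet_def using m il by simp
  ultimately have "w ! (length w - i + m) = w ! m" by simp
  then show "drop (length w - i) w ! m = take i w ! m" using m il by simp
qed

lemma inj_aux:
  assumes e: "take p w @ t = take p' w @ t'" and pp: "p < p'" "p' \<le> length w"
    and t': "occ w t' 0"
    and t: "\<forall>r. occ w t r \<longleftrightarrow> r = 0 \<or> r = length t - length w"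
    and ne: "p' - p \<noteq> length t - length w"
  shows False
proof -
  have "occ w (take p' w @ t') (length (take p' w) + 0)" using occ_append t' by (metis add_0_right)
  then have "occ w (take p' w @ t') p'" using pp by simp
  then have "occ w (take p w @ t) (length (take p w) + (p' - p))" using e pp by simp
  then have "occ w t (p' - p)" using occ_append by metis
  then show False using t ne pp by auto
qed

lemma inj1:
  assumes fin: "finite \<Omega>" and sw: "set w \<subseteq> \<Omega>" and n: "2 * length w < n"
    and If: "finite I" and Ip: "\<forall>i\<in>I. 1 \<le> i \<and> i < length w \<and> autoc w i"
  shows "(\<Sum>i\<in>I. card (Gs \<Omega> w (n - length w + i))) \<le> card (Bad \<Omega> w n)"
proof -
  define k where "k = length w"
  define f where "f = (\<lambda>(i::nat, t::'a list). take (k - i) w @ t)"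
  have memb: "f (i, t) \<in> Bad \<Omega> w n" if iI: "i \<in> I" and tG: "t \<in> Gs \<Omega> w (n - k + i)" for i t
  proof -
    have i: "1 \<le> i" "i < k" "autoc w i" using Ip iI k_def by auto
    define p where "p = k - i"
    have lt: "length t = n - k + i" and st: "set t \<subseteq> \<Omega>"
      and ot: "\<And>r. occ w t r \<longleftrightarrow> r = 0 \<or> r = n - k + i - k"
      using tG unfolding Gs_def k_def by auto
    have lp: "length (take p w) = p" using p_def k_def by simp
    have fs: "f (i, t) = take p w @ t" unfolding f_def p_def by simp
    have len: "length (take p w @ t) = n" using lp lt p_def i n k_def by simp
    have set: "set (take p w @ t) \<subseteq> \<Omega>" using st sw set_take_subset[of p w] by auto
    have o0: "occ w (take p w @ t) 0"
    proof -
      have t0: "occ w t 0" using ot by simp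
      then have tk: "take k t = w" unfolding occ_def k_def by simp
      have "take i t = take i w" using tk i by (metis min.absorb1 less_imp_le take_take)
      moreover have "drop p w = take i w" using autoc_period[of w i] i p_def k_def by simp
      ultimately have "take p w @ take i t = w" by (metis append_take_drop_id)
      moreover have "take k (take p w @ t) = take p w @ take i t" using lp p_def i by simp
      ultimately show ?thesis unfolding occ_def k_def[symmetric] using len n k_def by simp
    qed
    have oe: "occ w (take p w @ t) (n - k)"
    proof -
      have "occ w t (n - k + i - k)" using ot by simp
      then have "occ w (take p w @ t) (length (take p w) + (n - k + i - k))" using occ_append by metis
      moreover have "length (take p w) + (n - k + i - k) = n - k" using lp p_def i n k_def by simp
      ultimately show ?thesis by simp
    qed
    have om: "\<not> occ w (take p w @ t) r" if "k \<le> r" "r < n - k" for r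
    proof
      assume "occ w (take p w @ t) r"
      moreover have "r = length (take p w) + (r - p)" using lp that p_def by simp
      ultimately have "occ w t (r - p)" using occ_append by metis
      then have "r - p = 0 \<or> r - p = n - k + i - k" using ot by simp
      then show False using that p_def i n by auto
    qed
    have op: "occ w (take p w @ t) p"
    proof -
      have "occ w t 0" using ot by simp
      then have "occ w (take p w @ t) (length (take p w) + 0)" using occ_append by metis
      then show ?thesis using lp by simp
    qed
    have p0: "0 < p" "p < k" using p_def i by auto
    show ?thesis unfolding fs Bad_def k_def[symmetric] using len set o0 oe om op p0 by blast
  qed
  have inj: "inj_on f (Sigma I (\<lambda>i. Gs \<Omega> w (n - k + i)))"
  proof (rule inj_onI)
    fix x y assume x: "x \<in> Sigma I (\<lambda>i. Gs \<Omega> w (n - k + i))" and y: "y \<in> Sigma I (\<lambda>i. Gs \<Omega> w (n - k + i))"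
      and e: "f x = f y"
    obtain i t where xi: "x = (i, t)" by (cases x)
    obtain j u where yj: "y = (j, u)" by (cases y)
    have i: "i \<in> I" "t \<in> Gs \<Omega> w (n - k + i)" using x xi by auto
    have j: "j \<in> I" "u \<in> Gs \<Omega> w (n - k + j)" using y yj by auto
    have e2: "take (k - i) w @ t = take (k - j) w @ u" using e xi yj f_def by simp
    have ib: "1 \<le> i" "i < k" "1 \<le> j" "j < k" using Ip i j k_def by auto
    have tprop: "occ w t 0" "\<forall>r. occ w t r \<longleftrightarrow> r = 0 \<or> r = length t - length w" "length t = n - k + i"
      using i(2) unfolding Gs_def by auto
    have uprop: "occ w u 0" "\<forall>r. occ w u r \<longleftrightarrow> r = 0 \<or> r = length u - length w" "length u = n - k + j"
      using j(2) unfolding Gs_def by auto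
    consider "i = j" | "i < j" | "j < i" by linarith
    then show "x = y"
    proof cases
      case 1 then show ?thesis using e2 xi yj by simp
    next
      case 2
      have a1: "k - j < k - i" "k - i \<le> length w" using 2 ib k_def by auto
      have a2: "(k - i) - (k - j) \<noteq> length u - length w" using 2 ib uprop(3) n k_def by simp
      have False
        using inj_aux[of "k - j" w u "k - i" t, OF e2[symmetric] a1 tprop(1) uprop(2) a2] .
      then show ?thesis ..
    next
      case 3
      have a1: "k - i < k - j" "k - j \<le> length w" using 3 ib k_def by auto
      have a2: "(k - j) - (k - i) \<noteq> length t - length w" using 3 ib tprop(3) n k_def by simp
      have False
        using inj_aux[of "k - i" w t "k - j" u, OF e2 a1 uprop(1) tprop(2) a2] .
      then show ?thesis ..
    qed
  qed
  have fins: "\<forall>i\<in>I. finite (Gs \<Omega> w (n - k + i))" using fin_Gs[OF fin] by blast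
  have "card (Sigma I (\<lambda>i. Gs \<Omega> w (n - k + i))) \<le> card (Bad \<Omega> w n)"
    by (rule card_inj_on_le[OF inj _ fin_Bad[OF fin]]) (use memb in auto)
  moreover have "card (Sigma I (\<lambda>i. Gs \<Omega> w (n - k + i))) = (\<Sum>i\<in>I. card (Gs \<Omega> w (n - k + i)))"
    using card_SigmaI[OF If fins] .
  ultimately show ?thesis using k_def by simp
qed



lemma inj2:
  assumes fin: "finite \<Omega>" and c2: "card \<Omega> \<ge> 2" and sw: "set w \<subseteq> \<Omega>"
    and k1: "1 \<le> length w" and n: "2 * length w < n"
  shows "card (Bad \<Omega> w n) \<le> card (Gs \<Omega> w n)"
proof -
  define k where "k = length w"
  have ex: "\<exists>c. c \<in> \<Omega> \<and> c \<notin> Lset \<Omega> w y" for y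
  proof (rule ccontr)
    assume "\<not> (\<exists>c. c \<in> \<Omega> \<and> c \<notin> Lset \<Omega> w y)"
    then have sub: "\<Omega> \<subseteq> Lset \<Omega> w y" by blast
    have "\<forall>a\<in>\<Omega>. \<forall>b\<in>\<Omega>. a = b"
    proof (intro ballI)
      fix a b assume "a \<in> \<Omega>" "b \<in> \<Omega>"
      then have "a \<in> Lset \<Omega> w y" "b \<in> Lset \<Omega> w y" using sub by auto
      then obtain r1 r2 where "0 < r1" "r1 \<le> length w" "occ w (w @ [a] @ y) r1"
        "0 < r2" "r2 \<le> length w" "occ w (w @ [b] @ y) r2" unfolding Lset_def by blast
      then show "a = b" using key by metis
    qed
    then have "card \<Omega> \<le> Suc 0" using card_le_Suc0_iff_eq[OF fin] by blast
    then show False using c2 by simp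
  qed
  define ch where "ch y = (SOME c. c \<in> \<Omega> \<and> c \<notin> Lset \<Omega> w y)" for y
  have ch: "ch y \<in> \<Omega> \<and> ch y \<notin> Lset \<Omega> w y" for y
    unfolding ch_def using someI_ex[OF ex[of y]] .
  define \<phi> where "\<phi> s = w @ [ch (drop (Suc k) s)] @ drop (Suc k) s" for s
  have dec: "s = w @ [s ! k] @ drop (Suc k) s" and sk: "s ! k \<in> Lset \<Omega> w (drop (Suc k) s)"
    if sB: "s \<in> Bad \<Omega> w n" for s
  proof -
    have ls: "length s = n" "set s \<subseteq> \<Omega>" using sB unfolding Bad_def by auto
    have "occ w s 0" using sB unfolding Bad_def by auto
    then have tk: "take k s = w" unfolding occ_def k_def by simp
    have "k < length s" using ls n k_def by simp
    then have "drop k s = s ! k # drop (Suc k) s" by (simp add: Cons_nth_drop_Suc)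
    then show d: "s = w @ [s ! k] @ drop (Suc k) s" using tk by (metis append_Cons append_Nil append_take_drop_id)
    have skO: "s ! k \<in> \<Omega>" using ls \<open>k < length s\<close> nth_mem by blast
    obtain r where r: "0 < r" "r < length w" "occ w s r" using sB unfolding Bad_def by blast
    then have "occ w (w @ [s ! k] @ drop (Suc k) s) r" using d by simp
    then show "s ! k \<in> Lset \<Omega> w (drop (Suc k) s)" unfolding Lset_def using skO r by auto
  qed
  have dropphi: "drop (Suc k) (\<phi> s) = drop (Suc k) s" for s
    unfolding \<phi>_def k_def by simp
  have memb: "\<phi> s \<in> Gs \<Omega> w n" if sB: "s \<in> Bad \<Omega> w n" for s
  proof -
    define y where "y = drop (Suc k) s"
    define c where "c = ch y"
    have ls: "length s = n" "set s \<subseteq> \<Omega>" using sB unfolding Bad_def by auto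
    have ps: "\<phi> s = (w @ [c]) @ y" unfolding \<phi>_def c_def y_def by simp
    have sd: "s = (w @ [s ! k]) @ y" using dec[OF sB] y_def by simp
    have cc: "c \<in> \<Omega>" "c \<notin> Lset \<Omega> w y" using ch c_def by auto
    have len: "length (\<phi> s) = n" using ps ls y_def n k_def by simp
    have set: "set (\<phi> s) \<subseteq> \<Omega>" using ps cc sw ls y_def set_drop_subset[of "Suc k" s] by auto
    have oc: "occ w (\<phi> s) p \<longleftrightarrow> p = 0 \<or> p = n - k" for p
    proof -
      consider "p = 0" | "0 < p \<and> p \<le> k" | "k < p" by linarith
      then show ?thesis
      proof cases
        case 1
        have "occ w (\<phi> s) 0" unfolding occ_def using ps len n k_def by simp
        then show ?thesis using 1 by simp
      next
        case 2
        have "\<not> occ w (\<phi> s) p"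
        proof
          assume "occ w (\<phi> s) p"
          then have "c \<in> Lset \<Omega> w y" unfolding Lset_def using cc 2 ps k_def by auto
          then show False using cc by simp
        qed
        moreover have "p \<noteq> n - k" using 2 n k_def by linarith
        ultimately show ?thesis using 2 by simp
      next
        case 3
        have eq: "p = length (w @ [c]) + (p - Suc k)" "p = length (w @ [s ! k]) + (p - Suc k)"
          using 3 k_def by auto
        have "occ w (\<phi> s) p = occ w y (p - Suc k)" using ps eq(1) occ_append by metis
        also have "\<dots> = occ w s p" using sd eq(2) occ_append by metis
        also have "\<dots> \<longleftrightarrow> p = n - k"
        proof
          assume o: "occ w s p"
          have "\<not> (k \<le> p \<and> p < n - k)" using o sB unfolding Bad_def k_def by blast
          moreover have "p + k \<le> n" using o ls unfolding occ_def k_def by simp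
          ultimately show "p = n - k" using 3 by simp
        next
          assume "p = n - k"
          then show "occ w s p" using sB unfolding Bad_def k_def by blast
        qed
        finally show ?thesis using 3 by simp
      qed
    qed
    show ?thesis unfolding Gs_def k_def[symmetric] using len set oc by blast
  qed
  have inj: "inj_on \<phi> (Bad \<Omega> w n)"
  proof (rule inj_onI)
    fix s1 s2 assume s1: "s1 \<in> Bad \<Omega> w n" and s2: "s2 \<in> Bad \<Omega> w n" and e: "\<phi> s1 = \<phi> s2"
    have y: "drop (Suc k) s1 = drop (Suc k) s2" using dropphi e by metis
    have l1: "s1 ! k \<in> Lset \<Omega> w (drop (Suc k) s1)" using sk[OF s1] .
    have l2: "s2 ! k \<in> Lset \<Omega> w (drop (Suc k) s1)" using sk[OF s2] y by simp
    obtain r1 where "0 < r1" "r1 \<le> length w" "occ w (w @ [s1 ! k] @ drop (Suc k) s1) r1"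
      using l1 unfolding Lset_def by blast
    moreover obtain r2 where "0 < r2" "r2 \<le> length w" "occ w (w @ [s2 ! k] @ drop (Suc k) s1) r2"
      using l2 unfolding Lset_def by blast
    ultimately have "s1 ! k = s2 ! k" using key by metis
    then show "s1 = s2" using dec[OF s1] dec[OF s2] y by metis
  qed
  show ?thesis
    by (rule card_inj_on_le[OF inj _ fin_Gs[OF fin]]) (use memb in auto)
qed



lemma Iset_props:
  assumes k1: "1 \<le> length w"
  shows "\<forall>i\<in>Iset w. 1 \<le> i \<and> i < length w \<and> autoc w i" and "finite (Iset w)"
proof -
  define k where "k = length w"
  have P: "1 \<le> brk w i0 \<and> brk w i0 < length w \<and> autoc w (brk w i0)"
    if i0: "1 \<le> i0" "i0 \<le> length w - 1" "autoc w i0" for i0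
  proof -
    define S where "S = {j \<in> {1..length w - 1}. autoc w j \<and>
     (\<exists>t::nat. 1 \<le> t \<and> t \<le> length w div (length w - j) \<and>
        int i0 = int (length w) - int t * (int (length w) - int j))}"
    have fS: "finite S" unfolding S_def by simp
    have d: "1 \<le> length w div (length w - i0)"
    proof -
      have "(length w - i0) div (length w - i0) \<le> length w div (length w - i0)"
        by (rule div_le_mono) simp
      moreover have "(length w - i0) div (length w - i0) = 1" using i0 k1 by simp
      ultimately show ?thesis by simp
    qed
    have "\<exists>t::nat. 1 \<le> t \<and> t \<le> length w div (length w - i0) \<and>
        int i0 = int (length w) - int t * (int (length w) - int i0)"
      by (rule exI[of _ 1]) (use d in simp)
    then have "i0 \<in> S" unfolding S_def using i0 by simp
    then have "S \<noteq> {}" by blast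
    then have "Max S \<in> S" using Max_in fS by blast
    moreover have "brk w i0 = Max S" unfolding brk_def S_def by simp
    ultimately have m: "brk w i0 \<in> {1..length w - 1}" "autoc w (brk w i0)"
      unfolding S_def by auto
    then show ?thesis using k1 by auto
  qed
  show "\<forall>i\<in>Iset w. 1 \<le> i \<and> i < length w \<and> autoc w i"
    unfolding Iset_def using P by blast
  have "Iset w \<subseteq> {..<length w}" unfolding Iset_def using P by blast
  then show "finite (Iset w)" using finite_subset by blast
qed

theorem corollary4p5:
  fixes \<Omega> :: "'a set" and w :: "'a list" and n :: nat
  assumes "finite \<Omega>" and "card \<Omega> \<ge> 2"
    and "set w \<subseteq> \<Omega>" and "length w \<ge> 1"
    and "n > 2 * length w"
  shows "Hw \<Omega> w n \<ge> (\<Sum>i\<in>Iset w. Hw \<Omega> w (n - length w + i))"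
proof -
  note Ip = Iset_props[OF assms(4)]
  have "(\<Sum>i\<in>Iset w. Hw \<Omega> w (n - length w + i)) = (\<Sum>i\<in>Iset w. int (card (Gs \<Omega> w (n - length w + i))))"
  proof (rule sum.cong)
    fix i assume "i \<in> Iset w"
    then have "1 \<le> i" using Ip by blast
    then have "length w + 1 \<le> n - length w + i" using assms(5) by simp
    then show "Hw \<Omega> w (n - length w + i) = int (card (Gs \<Omega> w (n - length w + i)))"
      using HG[OF assms(1)] by blast
  qed simp
  also have "\<dots> = int (\<Sum>i\<in>Iset w. card (Gs \<Omega> w (n - length w + i)))" by simp
  also have "\<dots> \<le> int (card (Bad \<Omega> w n))"
    using inj1[OF assms(1,3,5) Ip(2) Ip(1)] by (simp only: of_nat_le_iff)
  also have "\<dots> \<le> int (card (Gs \<Omega> w n))"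
    using inj2[OF assms(1,2,3,4,5)] by (simp only: of_nat_le_iff)
  also have "\<dots> = Hw \<Omega> w n" using HG[OF assms(1), of w n] assms(5) by simp
  finally show ?thesis .
qed

end
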